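(* Let $K_1,K_2$ be nonempty finite simplicial complexes (each having at least one vertex) on disjoint vertex sets, let $i\ge 0$, and let $K=K_1*K_2$ be their join. If $\dim K_1+\dim K_2\ge i+1$, then $B_i(K)$ is unbalanced.
   Context: The join $K_1*K_2$ is the complex on $V(K_1)\cup V(K_2)$ whose faces are $F_1\cup F_2$ with $F_1\in K_1$, $F_2\in K_2$. The dimension of a complex is the maximum of $|F|-1$ over its faces. $S_j(K)$ is the set of faces of cardinality $j+1$. For an oriented complex $K$ (orientation: ordering of each face up to even permutations), $B_i(K)$ is the signed bipartite graph on $S_i(K)\cup S_{i+1}(K)$ with edges $\{G,\bar G\}$ for $G\subset\bar G$, signed by the boundary incidence sign $\mathrm{sgn}([G],\partial[\bar G])\in\{\pm1\}$ ($(-1)^j$ if $G$ is $\bar G$ minus its $j$-th vertex with agreeing orientation, negated otherwise). A signed graph is balanced if every cycle has positive sign product; this property of $B_i(K)$ is independent of the orientation. *)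

theory Defs
  imports "HOL-Combinatorics.Permutations"
begin

text \<open>Finite abstract simplicial complexes: finite families of finite sets closed under subsets
  (so every nonempty complex contains the empty face).\<close>
definition simplicial_complex :: "'a set set \<Rightarrow> bool" where
  "simplicial_complex K \<longleftrightarrow> finite K \<and> (\<forall>F\<in>K. finite F) \<and> (\<forall>F\<in>K. \<forall>G. G \<subseteq> F \<longrightarrow> G \<in> K)"

definition vertices :: "'a set set \<Rightarrow> 'a set" where
  "vertices K = \<Union>K"

definition join :: "'a set set \<Rightarrow> 'a set set \<Rightarrow> 'a set set" where
  "join K1 K2 = {F1 \<union> F2 | F1 F2. F1 \<in> K1 \<and> F2 \<in> K2}"

definition cdim :: "'a set set \<Rightarrow> int" where
  "cdim K = Max ((\<lambda>F. int (card F) - 1) ` K)"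

definition faces_of :: "nat \<Rightarrow> 'a set set \<Rightarrow> 'a set set" where
  "faces_of j K = {F \<in> K. card F = j + 1}"

text \<open>An orientation: an ordering of each face (orderings are understood up to even permutations;
  all notions below only depend on that class).\<close>
definition orientation :: "'a set set \<Rightarrow> ('a set \<Rightarrow> 'a list) \<Rightarrow> bool" where
  "orientation K ord \<longleftrightarrow> (\<forall>F\<in>K. distinct (ord F) \<and> set (ord F) = F)"

fun pos_in :: "'a \<Rightarrow> 'a list \<Rightarrow> nat" where
  "pos_in x [] = 0"
| "pos_in x (y # ys) = (if x = y then 0 else Suc (pos_in x ys))"

definition list_perm :: "'a list \<Rightarrow> 'a list \<Rightarrow> nat \<Rightarrow> nat" where
  "list_perm xs ys = (\<lambda>k. if k < length xs then pos_in (xs ! k) ys else k)"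

definition rel_sign :: "'a list \<Rightarrow> 'a list \<Rightarrow> int" where
  "rel_sign xs ys = sign (list_perm xs ys)"

text \<open>Boundary incidence sign sgn([G], \<partial>[Gb]) for G = Gb minus one vertex:
  (-1)^j if G is Gb minus its j-th vertex (0-based) with agreeing orientation, negated otherwise.\<close>
definition inc_sign :: "('a set \<Rightarrow> 'a list) \<Rightarrow> 'a set \<Rightarrow> 'a set \<Rightarrow> int" where
  "inc_sign ord G Gb =
     (let L = ord Gb; v = the_elem (Gb - G)
      in (-1) ^ pos_in v L * rel_sign (remove1 v L) (ord G))"

definition B_vertices :: "nat \<Rightarrow> 'a set set \<Rightarrow> 'a set set" where
  "B_vertices i K = faces_of i K \<union> faces_of (i + 1) K"

definition B_adj :: "nat \<Rightarrow> 'a set set \<Rightarrow> 'a set \<Rightarrow> 'a set \<Rightarrow> bool" where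
  "B_adj i K x y \<longleftrightarrow>
     (x \<in> faces_of i K \<and> y \<in> faces_of (i + 1) K \<and> x \<subset> y) \<or>
     (y \<in> faces_of i K \<and> x \<in> faces_of (i + 1) K \<and> y \<subset> x)"

definition B_sign :: "('a set \<Rightarrow> 'a list) \<Rightarrow> 'a set \<Rightarrow> 'a set \<Rightarrow> int" where
  "B_sign ord x y = (if card x < card y then inc_sign ord x y else inc_sign ord y x)"

definition B_cycle :: "nat \<Rightarrow> 'a set set \<Rightarrow> 'a set list \<Rightarrow> bool" where
  "B_cycle i K c \<longleftrightarrow> length c \<ge> 3 \<and> distinct c \<and> set c \<subseteq> B_vertices i K \<and>
     (\<forall>j < length c. B_adj i K (c ! j) (c ! ((j + 1) mod length c)))"

definition cycle_sign :: "('a set \<Rightarrow> 'a list) \<Rightarrow> 'a set list \<Rightarrow> int" where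
  "cycle_sign ord c = (\<Prod>j < length c. B_sign ord (c ! j) (c ! ((j + 1) mod length c)))"

definition B_balanced :: "nat \<Rightarrow> 'a set set \<Rightarrow> ('a set \<Rightarrow> 'a list) \<Rightarrow> bool" where
  "B_balanced i K ord \<longleftrightarrow> (\<forall>c. B_cycle i K c \<longrightarrow> cycle_sign ord c > 0)"

end

theory Submission
  imports Defs
begin

lemma pos_in_less: "x \<in> set ys \<Longrightarrow> pos_in x ys < length ys"
  by (induction ys) auto

lemma nth_pos_in: "x \<in> set ys \<Longrightarrow> ys ! pos_in x ys = x"
  by (induction ys) auto

lemma pos_in_nth: "distinct ys \<Longrightarrow> k < length ys \<Longrightarrow> pos_in (ys ! k) ys = k"
proof (induction ys arbitrary: k)
  case Nil then show ?case by simp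
next
  case (Cons a ys) then show ?case by (cases k) auto
qed

lemma pos_in_append1: "x \<in> set ys \<Longrightarrow> pos_in x (ys @ zs) = pos_in x ys"
  by (induction ys) auto

lemma pos_in_append2: "x \<notin> set ys \<Longrightarrow> pos_in x (ys @ zs) = length ys + pos_in x zs"
  by (induction ys) auto

lemma list_perm_eqI:
  assumes "distinct ys" "length xs = length ys"
    and "\<And>k. k \<ge> length xs \<Longrightarrow> f k = k"
    and "\<And>k. k < length xs \<Longrightarrow> f k < length xs \<and> xs ! k = ys ! f k"
  shows "list_perm xs ys = f"
proof
  fix k show "list_perm xs ys k = f k"
  proof (cases "k < length xs")
    case True
    then show ?thesis using assms(4)[OF True] pos_in_nth[OF assms(1), of "f k"] assms(2)
      by (simp add: list_perm_def)
  next
    case False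
    then show ?thesis using assms(3) by (simp add: list_perm_def)
  qed
qed

lemma list_perm_comp:
  assumes "length xs = length ys" "length ys = length zs" "set xs \<subseteq> set ys"
  shows "list_perm ys zs \<circ> list_perm xs ys = list_perm xs zs"
proof
  fix k
  show "(list_perm ys zs \<circ> list_perm xs ys) k = list_perm xs zs k"
  proof (cases "k < length xs")
    case True
    then have m: "xs ! k \<in> set ys" using assms(3) by auto
    show ?thesis using True pos_in_less[OF m] nth_pos_in[OF m] assms
      by (simp add: list_perm_def)
  next
    case False then show ?thesis using assms by (simp add: list_perm_def)
  qed
qed

lemma list_perm_id: "distinct xs \<Longrightarrow> list_perm xs xs = id"
  by (rule list_perm_eqI) auto

lemma list_perm_range:
  assumes "set xs \<subseteq> set ys" "length xs = length ys" "k < length xs"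
  shows "list_perm xs ys k < length xs"
proof -
  have "xs ! k \<in> set xs" using assms(3) by (rule nth_mem)
  then have m: "xs ! k \<in> set ys" using assms(1) by blast
  have "list_perm xs ys k = pos_in (xs ! k) ys" using assms(3) by (simp add: list_perm_def)
  then show ?thesis using pos_in_less[OF m] assms(2) by simp
qed

lemma list_perm_permutation:
  assumes "distinct xs" "distinct ys" "set xs = set ys"
  shows "permutation (list_perm xs ys)"
proof -
  have len: "length xs = length ys" using assms distinct_card by metis
  let ?p = "list_perm xs ys" and ?q = "list_perm ys xs"
  have 1: "?q \<circ> ?p = id"
  proof -
    have "?q \<circ> ?p = list_perm xs xs" by (rule list_perm_comp[OF len len[symmetric] equalityD1[OF assms(3)]])
    then show ?thesis using list_perm_id[OF assms(1)] by simp
  qed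
  have 2: "?p \<circ> ?q = id"
  proof -
    have "?p \<circ> ?q = list_perm ys ys" by (rule list_perm_comp[OF len[symmetric] len equalityD2[OF assms(3)]])
    then show ?thesis using list_perm_id[OF assms(2)] by simp
  qed
  have inv1: "\<And>k. ?q (?p k) = k" using fun_cong[OF 1] by simp
  have inv2: "\<And>k. ?p (?q k) = k" using fun_cong[OF 2] by simp
  have "?p permutes {..<length xs}"
  proof (rule bij_imp_permutes)
    show "bij_betw ?p {..<length xs} {..<length xs}"
    proof (rule bij_betw_imageI)
      show "inj_on ?p {..<length xs}" by (rule inj_on_inverseI[where g = ?q]) (rule inv1)
      show "?p ` {..<length xs} = {..<length xs}"
      proof
        show "?p ` {..<length xs} \<subseteq> {..<length xs}"
        proof
          fix j assume "j \<in> ?p ` {..<length xs}"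
          then obtain k where k: "k < length xs" "j = ?p k" by auto
          have "?p k < length xs" by (rule list_perm_range[OF equalityD1[OF assms(3)] len k(1)])
          then show "j \<in> {..<length xs}" using k(2) by simp
        qed
        show "{..<length xs} \<subseteq> ?p ` {..<length xs}"
        proof
          fix k assume k: "k \<in> {..<length xs}"
          have "?q k < length ys"
            using k len by (intro list_perm_range[OF equalityD2[OF assms(3)] len[symmetric]]) simp
          then have "?q k < length xs" using len by simp
          then have "?p (?q k) \<in> ?p ` {..<length xs}" by simp
          then show "k \<in> ?p ` {..<length xs}" using inv2 by simp
        qed
      qed
    qed
    show "\<And>x. x \<notin> {..<length xs} \<Longrightarrow> ?p x = x" by (simp add: list_perm_def)
  qed
  then show ?thesis by (rule permutes_imp_permutation[rotated]) simp
qed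

lemma rel_sign_mult:
  assumes "distinct xs" "distinct ys" "distinct zs" "set xs = set ys" "set ys = set zs"
  shows "rel_sign xs zs = rel_sign xs ys * rel_sign ys zs"
proof -
  have l1: "length xs = length ys" using assms(1,2,4) distinct_card by metis
  have l2: "length ys = length zs" using assms(2,3,5) distinct_card by metis
  have p1: "permutation (list_perm xs ys)" by (rule list_perm_permutation[OF assms(1,2,4)])
  have p2: "permutation (list_perm ys zs)" by (rule list_perm_permutation[OF assms(2,3,5)])
  have eq: "list_perm xs zs = list_perm ys zs \<circ> list_perm xs ys"
    by (rule list_perm_comp[OF l1 l2 equalityD1[OF assms(4)], symmetric])
  show ?thesis unfolding rel_sign_def eq sign_compose[OF p2 p1] by (rule mult.commute)
qed

lemma rel_sign_refl: "distinct xs \<Longrightarrow> rel_sign xs xs = 1"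
  by (simp add: rel_sign_def list_perm_id)

lemma rel_sign_sq: "rel_sign xs ys * rel_sign xs ys = 1"
  by (simp add: rel_sign_def)

lemma rel_sign_sym:
  assumes "distinct xs" "distinct ys" "set xs = set ys"
  shows "rel_sign ys xs = rel_sign xs ys"
proof -
  have "rel_sign xs xs = rel_sign xs ys * rel_sign ys xs"
    by (rule rel_sign_mult[OF assms(1,2,1) assms(3) assms(3)[symmetric]])
  then have "rel_sign xs ys * rel_sign ys xs = 1" using rel_sign_refl[OF assms(1)] by simp
  then have "rel_sign xs ys * (rel_sign xs ys * rel_sign ys xs) = rel_sign xs ys" by simp
  then show ?thesis by (simp add: mult.assoc[symmetric] rel_sign_sq)
qed

lemma rel_sign_swap:
  assumes d: "distinct (as @ u # w # bs)"
  shows "rel_sign (as @ u # w # bs) (as @ w # u # bs) = -1"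
proof -
  let ?k = "length as"
  have "list_perm (as @ u # w # bs) (as @ w # u # bs) = Transposition.transpose ?k (Suc ?k)"
  proof (rule list_perm_eqI)
    show "distinct (as @ w # u # bs)" using d by auto
    show "length (as @ u # w # bs) = length (as @ w # u # bs)" by simp
    show "\<And>k. length (as @ u # w # bs) \<le> k \<Longrightarrow> Transposition.transpose ?k (Suc ?k) k = k"
      by (auto simp: Transposition.transpose_def)
    fix k assume k: "k < length (as @ u # w # bs)"
    show "Transposition.transpose ?k (Suc ?k) k < length (as @ u # w # bs) \<and>
      (as @ u # w # bs) ! k = (as @ w # u # bs) ! Transposition.transpose ?k (Suc ?k) k"
    proof (cases "k < ?k")
      case True then show ?thesis by (auto simp: Transposition.transpose_def nth_append)
    next
      case False
      then obtain j where j: "k = ?k + j" by (metis le_add_diff_inverse not_less)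
      show ?thesis using k
        by (cases j; cases "j - 1") (auto simp: j Transposition.transpose_def nth_append)
    qed
  qed
  then show ?thesis by (simp add: rel_sign_def sign_swap_id)
qed

lemma list_perm_snoc:
  assumes v1: "v \<notin> set xs" and v2: "v \<notin> set ys" and s: "set xs = set ys" and l: "length xs = length ys"
  shows "list_perm (xs @ [v]) (ys @ [v]) = list_perm xs ys"
proof
  fix k show "list_perm (xs @ [v]) (ys @ [v]) k = list_perm xs ys k"
  proof (cases "k < length xs")
    case True
    have m: "xs ! k \<in> set ys" using True s nth_mem by metis
    have "list_perm (xs @ [v]) (ys @ [v]) k = pos_in ((xs @ [v]) ! k) (ys @ [v])"
      using True by (simp add: list_perm_def)
    also have "\<dots> = pos_in (xs ! k) ys" using True m by (simp add: nth_append pos_in_append1)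
    also have "\<dots> = list_perm xs ys k" using True by (simp add: list_perm_def)
    finally show ?thesis .
  next
    case False
    show ?thesis
    proof (cases "k = length xs")
      case True
      have "pos_in v (ys @ [v]) = length ys" using v2 by (simp add: pos_in_append2)
      moreover have "(xs @ [v]) ! k = v" using True by simp
      ultimately show ?thesis using True l by (simp add: list_perm_def)
    next
      case F2: False
      then show ?thesis using False by (simp add: list_perm_def)
    qed
  qed
qed

lemma move_to_end:
  "distinct (as @ v # bs) \<Longrightarrow> rel_sign (as @ v # bs) (as @ bs @ [v]) = (-1) ^ length bs"
proof (induction bs arbitrary: as)
  case Nil then show ?case by (simp add: rel_sign_refl)
next
  case (Cons b bs)
  have d2: "distinct ((as @ [b]) @ v # bs)" using Cons.prems by auto
  have "rel_sign (as @ v # b # bs) ((as @ [b]) @ bs @ [v]) =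
      rel_sign (as @ v # b # bs) (as @ b # v # bs) * rel_sign ((as @ [b]) @ v # bs) ((as @ [b]) @ bs @ [v])"
    using rel_sign_mult[of "as @ v # b # bs" "as @ b # v # bs" "(as @ [b]) @ bs @ [v]"] Cons.prems
    by auto
  also have "\<dots> = - ((-1) ^ length bs)" using rel_sign_swap[OF Cons.prems] Cons.IH[OF d2] by simp
  finally show ?case by simp
qed

lemma even_pow_eq: "even (a + b) \<Longrightarrow> (-1::int) ^ a = (-1) ^ b"
  by (simp add: minus_one_power_iff)

lemma rel_sign_remove:
  assumes dL: "distinct L" and dM: "distinct M" and s: "set L = set M" and v: "v \<in> set L"
  shows "rel_sign L M = (-1) ^ (pos_in v L + pos_in v M) * rel_sign (remove1 v L) (remove1 v M)"
proof -
  obtain as bs where L: "L = as @ v # bs" using v split_list by metis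
  obtain cs ds where M: "M = cs @ v # ds" using v s split_list by metis
  have len: "length L = length M" using dL dM s distinct_card by metis
  have va: "v \<notin> set as" "v \<notin> set bs" "v \<notin> set cs" "v \<notin> set ds" using dL dM L M by auto
  have pL: "pos_in v L = length as" using va L by (simp add: pos_in_append2)
  have pM: "pos_in v M = length cs" using va M by (simp add: pos_in_append2)
  have rL: "remove1 v L = as @ bs" using va L by (simp add: remove1_append)
  have rM: "remove1 v M = cs @ ds" using va M by (simp add: remove1_append)
  have sets: "set (as @ bs) = set (cs @ ds)"
  proof -
    have "set (as @ bs) = set L - {v}" using L va by auto
    moreover have "set (cs @ ds) = set M - {v}" using M va by auto
    ultimately show ?thesis using s by simp
  qed
  have lens: "length (as @ bs) = length (cs @ ds)" using len L M by simp
  have mid: "rel_sign ((as @ bs) @ [v]) ((cs @ ds) @ [v]) = rel_sign (as @ bs) (cs @ ds)"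
    unfolding rel_sign_def using list_perm_snoc[of v "as @ bs" "cs @ ds"] va sets lens by simp
  have e1: "rel_sign L (as @ bs @ [v]) = (-1) ^ length bs" using move_to_end dL L by simp
  have e3: "rel_sign (cs @ ds @ [v]) M = (-1) ^ length ds"
    using move_to_end[of cs v ds] dM M rel_sign_sym[of M "cs @ ds @ [v]"] by auto
  have "rel_sign L M = rel_sign L (as @ bs @ [v]) * rel_sign (as @ bs @ [v]) M"
    using rel_sign_mult[of L "as @ bs @ [v]" M] dL dM L M s by auto
  also have "rel_sign (as @ bs @ [v]) M = rel_sign (as @ bs @ [v]) (cs @ ds @ [v]) * rel_sign (cs @ ds @ [v]) M"
    using rel_sign_mult[of "as @ bs @ [v]" "cs @ ds @ [v]" M] dL dM L M s by auto
  finally have "rel_sign L M = (-1) ^ length bs * ((-1) ^ length ds * rel_sign (as @ bs) (cs @ ds))"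
    using e1 e3 mid by simp
  also have "\<dots> = (-1) ^ (length bs + length ds) * rel_sign (as @ bs) (cs @ ds)"
    by (simp add: power_add)
  also have "(-1::int) ^ (length bs + length ds) = (-1) ^ (length as + length cs)"
  proof (intro even_pow_eq)
    have "length as + length bs = length cs + length ds" using len L M by simp
    then show "even (length bs + length ds + (length as + length cs))" by presburger
  qed
  finally show ?thesis using pL pM rL rM by simp
qed

lemma pos_remove_sum:
  "distinct W \<Longrightarrow> x \<in> set W \<Longrightarrow> y \<in> set W \<Longrightarrow> x \<noteq> y \<Longrightarrow>
   pos_in y (remove1 x W) + pos_in x (remove1 y W) + 1 = pos_in x W + pos_in y W"
  by (induction W) auto

lemma edge_sign:
  assumes dW: "distinct W" and x: "x \<in> set W" and y: "y \<in> set W" and xy: "x \<noteq> y"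
    and o1: "distinct (ord (set W - {x}))" "set (ord (set W - {x})) = set W - {x}"
    and o2: "distinct (ord (set W - {x, y}))" "set (ord (set W - {x, y})) = set W - {x, y}"
  shows "inc_sign ord (set W - {x, y}) (set W - {x}) =
    (-1) ^ pos_in y (remove1 x W) * rel_sign (ord (set W - {x})) (remove1 x W)
      * rel_sign (remove1 y (remove1 x W)) (ord (set W - {x, y}))"
proof -
  let ?L = "ord (set W - {x})" and ?M = "remove1 x W" and ?G = "ord (set W - {x, y})"
  have te: "the_elem ((set W - {x}) - (set W - {x, y})) = y"
  proof -
    have "(set W - {x}) - (set W - {x, y}) = {y}" using y xy by auto
    then show ?thesis by simp
  qed
  have dM: "distinct ?M" using dW by simp
  have sM: "set ?M = set W - {x}" using dW by simp
  have yL: "y \<in> set ?L" using o1 y xy by auto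
  have R: "rel_sign ?L ?M = (-1) ^ (pos_in y ?L + pos_in y ?M) * rel_sign (remove1 y ?L) (remove1 y ?M)"
    using rel_sign_remove[OF o1(1) dM _ yL] o1 sM by simp
  have s1: "set (remove1 y ?L) = set W - {x, y}" using o1 by auto
  have s2: "set (remove1 y ?M) = set W - {x, y}" using dM sM by auto
  have mult: "rel_sign (remove1 y ?L) ?G = rel_sign (remove1 y ?L) (remove1 y ?M) * rel_sign (remove1 y ?M) ?G"
    using rel_sign_mult[of "remove1 y ?L" "remove1 y ?M" ?G] o1 o2 dM s1 s2 by simp
  define a where "a = (-1::int) ^ pos_in y ?L"
  define b where "b = (-1::int) ^ pos_in y ?M"
  have aa: "a * a = 1" unfolding a_def by (simp add: power_mult_distrib[symmetric])
  have bb: "b * b = 1" unfolding b_def by (simp add: power_mult_distrib[symmetric])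
  have R': "rel_sign (remove1 y ?L) (remove1 y ?M) = a * b * rel_sign ?L ?M"
  proof -
    have "a * b * rel_sign ?L ?M = (a * a) * (b * b) * rel_sign (remove1 y ?L) (remove1 y ?M)"
      using R by (simp add: a_def b_def power_add mult_ac)
    then show ?thesis using aa bb by simp
  qed
  have "inc_sign ord (set W - {x, y}) (set W - {x}) = a * rel_sign (remove1 y ?L) ?G"
    unfolding inc_sign_def Let_def te a_def by simp
  also have "\<dots> = (a * a) * b * rel_sign ?L ?M * rel_sign (remove1 y ?M) ?G"
    using mult R' by (simp add: mult_ac)
  finally show ?thesis using aa by (simp add: b_def)
qed

lemma p6: "(\<Prod>j<(6::nat). g j) = (g 0 * g 1 * g 2 * g 3 * g 4 * g 5 :: int)"
  by (simp add: numeral_eq_Suc mult.assoc)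

lemma cycle6:
  "cycle_sign ord [a0, a1, a2, a3, a4, a5] =
   B_sign ord a0 a1 * B_sign ord a1 a2 * B_sign ord a2 a3 * B_sign ord a3 a4 * B_sign ord a4 a5 * B_sign ord a5 a0"
  unfolding cycle_sign_def by (simp add: p6)

lemma B_sign_lt: "card x < card y \<Longrightarrow> B_sign ord x y = inc_sign ord x y"
  by (simp add: B_sign_def)

lemma B_sign_gt: "card y < card x \<Longrightarrow> B_sign ord x y = inc_sign ord y x"
  by (simp add: B_sign_def)

lemma prod6:
  fixes a b d c f g p1 p2 p3 p4 p5 p6 :: int
  assumes "a * a = 1" "b * b = 1" "d * d = 1" "c * c = 1" "f * f = 1" "g * g = 1"
  shows "(p1 * a * c) * (p2 * b * c) * (p3 * b * f) * (p4 * d * f) * (p5 * d * g) * (p6 * a * g)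
     = p1 * p2 * p3 * p4 * p5 * p6"
proof -
  have "(p1 * a * c) * (p2 * b * c) * (p3 * b * f) * (p4 * d * f) * (p5 * d * g) * (p6 * a * g)
     = (p1 * p2 * p3 * p4 * p5 * p6) * (a * a) * (b * b) * (d * d) * (c * c) * (f * f) * (g * g)"
    by (simp only: mult_ac)
  then show ?thesis using assms by simp
qed

lemma cycle_neg:
  assumes dW: "distinct W" and xyz: "x \<in> set W" "y \<in> set W" "z \<in> set W"
    and ne: "x \<noteq> y" "y \<noteq> z" "z \<noteq> x"
    and ok: "\<And>H. H \<subseteq> set W \<Longrightarrow> distinct (ord H) \<and> set (ord H) = H"
  shows "cycle_sign ord [set W - {x}, set W - {x, y}, set W - {y}, set W - {y, z},
     set W - {z}, set W - {z, x}] = -1"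
proof -
  have cV: "card (set W) = length W" using dW by (rule distinct_card)
  have fV: "finite (set W)" by (rule finite_set)
  have c1: "\<And>a. a \<in> set W \<Longrightarrow> card (set W - {a}) = length W - 1"
  proof -
    fix a assume "a \<in> set W"
    then have "card (set W - {a}) = card (set W) - 1" by (rule card_Diff_singleton)
    then show "card (set W - {a}) = length W - 1" using cV by simp
  qed
  have c2: "\<And>a b. a \<in> set W \<Longrightarrow> b \<in> set W \<Longrightarrow> a \<noteq> b \<Longrightarrow> card (set W - {a, b}) = length W - 2"
  proof -
    fix a b assume ab: "a \<in> set W" "b \<in> set W" "a \<noteq> b"
    have sub: "{a, b} \<subseteq> set W" using ab by blast
    have "card (set W - {a, b}) = card (set W) - card {a, b}" by (rule card_Diff_subset[OF _ sub]) simp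
    moreover have "card {a, b} = 2" using ab(3) by simp
    ultimately show "card (set W - {a, b}) = length W - 2" using cV by simp
  qed
  have l3: "length W \<ge> 3"
  proof -
    have sub: "{x, y, z} \<subseteq> set W" using xyz by blast
    have "card {x, y, z} \<le> card (set W)" by (rule card_mono[OF fV sub])
    moreover have "card {x, y, z} = 3" using ne by simp
    ultimately show ?thesis using cV by simp
  qed
  have lt: "\<And>a b c. a \<in> set W \<Longrightarrow> b \<in> set W \<Longrightarrow> c \<in> set W \<Longrightarrow> a \<noteq> b \<Longrightarrow>
      card (set W - {a, b}) < card (set W - {c})"
  proof -
    fix a b c assume "a \<in> set W" "b \<in> set W" "c \<in> set W" "a \<noteq> b"
    then have "card (set W - {a, b}) = length W - 2" "card (set W - {c}) = length W - 1"
      using c1[of c] c2[of a b] by auto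
    then show "card (set W - {a, b}) < card (set W - {c})" using l3 by simp
  qed
  define A where "A = (\<lambda>a. rel_sign (ord (set W - {a})) (remove1 a W))"
  define C where "C = (\<lambda>a b. rel_sign (remove1 b (remove1 a W)) (ord (set W - {a, b})))"
  define e where "e = (\<lambda>a b. (-1::int) ^ pos_in b (remove1 a W))"
  have E: "inc_sign ord (set W - {a, b}) (set W - {a}) = e a b * A a * C a b"
    if ab: "a \<in> set W" "b \<in> set W" "a \<noteq> b" for a b
  proof -
    have s1: "set W - {a} \<subseteq> set W" by blast
    have s2: "set W - {a, b} \<subseteq> set W" by blast
    have o1: "distinct (ord (set W - {a}))" "set (ord (set W - {a})) = set W - {a}"
      using ok[OF s1] by blast+
    have o2: "distinct (ord (set W - {a, b}))" "set (ord (set W - {a, b})) = set W - {a, b}"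
      using ok[OF s2] by blast+
    show ?thesis unfolding A_def C_def e_def by (rule edge_sign[OF dW ab o1 o2])
  qed
  have Csym: "C a b = C b a" for a b
  proof -
    have r: "remove1 b (remove1 a W) = remove1 a (remove1 b W)" by (rule remove1_commute)
    have i: "{a, b} = {b, a}" by blast
    show ?thesis unfolding C_def r i ..
  qed
  have E': "inc_sign ord (set W - {a, b}) (set W - {b}) = e b a * A b * C a b"
    if ab: "a \<in> set W" "b \<in> set W" "a \<noteq> b" for a b
  proof -
    have i: "{a, b} = {b, a}" by blast
    have "inc_sign ord (set W - {b, a}) (set W - {b}) = e b a * A b * C b a"
      by (rule E) (use ab in auto)
    then show ?thesis unfolding i Csym[of b a] .
  qed
  have sq: "\<And>a. A a * A a = 1" "\<And>a b. C a b * C a b = 1" unfolding A_def C_def by (rule rel_sign_sq)+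
  have "cycle_sign ord [set W - {x}, set W - {x, y}, set W - {y}, set W - {y, z}, set W - {z}, set W - {z, x}] =
     inc_sign ord (set W - {x, y}) (set W - {x}) * inc_sign ord (set W - {x, y}) (set W - {y}) *
     inc_sign ord (set W - {y, z}) (set W - {y}) * inc_sign ord (set W - {y, z}) (set W - {z}) *
     inc_sign ord (set W - {z, x}) (set W - {z}) * inc_sign ord (set W - {z, x}) (set W - {x})"
    unfolding cycle6
      B_sign_gt[OF lt[OF xyz(1) xyz(2) xyz(1) ne(1)]] B_sign_lt[OF lt[OF xyz(1) xyz(2) xyz(2) ne(1)]]
      B_sign_gt[OF lt[OF xyz(2) xyz(3) xyz(2) ne(2)]] B_sign_lt[OF lt[OF xyz(2) xyz(3) xyz(3) ne(2)]]
      B_sign_gt[OF lt[OF xyz(3) xyz(1) xyz(3) ne(3)]] B_sign_lt[OF lt[OF xyz(3) xyz(1) xyz(1) ne(3)]]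
    ..
  also have "\<dots> = (e x y * A x * C x y) * (e y x * A y * C x y) * (e y z * A y * C y z) *
      (e z y * A z * C y z) * (e z x * A z * C z x) * (e x z * A x * C z x)"
    unfolding E[OF xyz(1) xyz(2) ne(1)] E'[OF xyz(1) xyz(2) ne(1)]
      E[OF xyz(2) xyz(3) ne(2)] E'[OF xyz(2) xyz(3) ne(2)]
      E[OF xyz(3) xyz(1) ne(3)] E'[OF xyz(3) xyz(1) ne(3)] ..
  also have "\<dots> = e x y * e y x * e y z * e z y * e z x * e x z"
    by (rule prod6) (rule sq)+
  also have "\<dots> = -1"
  proof -
    have p: "pos_in y (remove1 x W) + pos_in x (remove1 y W) + 1 = pos_in x W + pos_in y W"
      "pos_in z (remove1 y W) + pos_in y (remove1 z W) + 1 = pos_in y W + pos_in z W"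
      "pos_in x (remove1 z W) + pos_in z (remove1 x W) + 1 = pos_in z W + pos_in x W"
      using pos_remove_sum[OF dW] xyz ne by auto
    define n where "n = pos_in y (remove1 x W) + pos_in x (remove1 y W) + pos_in z (remove1 y W)
        + pos_in y (remove1 z W) + pos_in x (remove1 z W) + pos_in z (remove1 x W)"
    have "(pos_in y (remove1 x W) + pos_in x (remove1 y W) + 1) + (pos_in z (remove1 y W) + pos_in y (remove1 z W) + 1)
       + (pos_in x (remove1 z W) + pos_in z (remove1 x W) + 1)
       = (pos_in x W + pos_in y W) + (pos_in y W + pos_in z W) + (pos_in z W + pos_in x W)"
      by (simp only: p)
    then have "n + 3 = 2 * (pos_in x W + pos_in y W + pos_in z W)" unfolding n_def by simp
    then have on: "odd n" by presburger
    have "e x y * e y x * e y z * e z y * e z x * e x z = (-1::int) ^ n"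
      unfolding e_def n_def by (simp only: power_add mult.assoc)
    also have "\<dots> = -1" using on by (simp add: minus_one_power_iff)
    finally show ?thesis .
  qed
  finally show ?thesis .
qed

lemma join_sub:
  assumes "simplicial_complex K1" "simplicial_complex K2" "F1 \<in> K1" "F2 \<in> K2" "H \<subseteq> F1 \<union> F2"
  shows "H \<in> join K1 K2"
proof -
  have c1: "\<forall>F\<in>K1. \<forall>G. G \<subseteq> F \<longrightarrow> G \<in> K1" using assms(1) unfolding simplicial_complex_def by simp
  have c2: "\<forall>F\<in>K2. \<forall>G. G \<subseteq> F \<longrightarrow> G \<in> K2" using assms(2) unfolding simplicial_complex_def by simp
  have "H \<inter> F1 \<in> K1" using c1 assms(3) by blast
  moreover have "H \<inter> F2 \<in> K2" using c2 assms(4) by blast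
  moreover have "H = (H \<inter> F1) \<union> (H \<inter> F2)" using assms(5) by blast
  ultimately show ?thesis unfolding join_def by blast
qed

lemma max_face:
  assumes "simplicial_complex K" "vertices K \<noteq> {}"
  obtains F where "F \<in> K" "int (card F) - 1 = cdim K"
proof -
  have "finite K" "K \<noteq> {}" using assms unfolding simplicial_complex_def vertices_def by auto
  then have "cdim K \<in> (\<lambda>F. int (card F) - 1) ` K" unfolding cdim_def by (intro Max_in) auto
  then show ?thesis using that by auto
qed

lemma B_cycle6:
  assumes "distinct [a0, a1, a2, a3, a4, a5]" "set [a0, a1, a2, a3, a4, a5] \<subseteq> B_vertices i K"
    "B_adj i K a0 a1" "B_adj i K a1 a2" "B_adj i K a2 a3" "B_adj i K a3 a4" "B_adj i K a4 a5" "B_adj i K a5 a0"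
  shows "B_cycle i K [a0, a1, a2, a3, a4, a5]"
proof -
  have "\<forall>j < 6. B_adj i K ([a0, a1, a2, a3, a4, a5] ! j) ([a0, a1, a2, a3, a4, a5] ! ((j + 1) mod 6))"
  proof (intro allI impI)
    fix j :: nat assume "j < 6"
    then have "j = 0 \<or> j = 1 \<or> j = 2 \<or> j = 3 \<or> j = 4 \<or> j = 5" by linarith
    then show "B_adj i K ([a0, a1, a2, a3, a4, a5] ! j) ([a0, a1, a2, a3, a4, a5] ! ((j + 1) mod 6))"
      using assms(3-8) by (elim disjE) simp_all
  qed
  then show ?thesis unfolding B_cycle_def using assms(1,2) by simp
qed

lemma diff_ne: "a \<in> V \<Longrightarrow> a \<in> B \<Longrightarrow> a \<notin> A \<Longrightarrow> V - A \<noteq> V - B"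
  by blast

lemma adj_up: "G \<in> faces_of i K \<Longrightarrow> H \<in> faces_of (i + 1) K \<Longrightarrow> G \<subset> H \<Longrightarrow> B_adj i K G H"
  unfolding B_adj_def by blast

lemma adj_down: "G \<in> faces_of i K \<Longrightarrow> H \<in> faces_of (i + 1) K \<Longrightarrow> G \<subset> H \<Longrightarrow> B_adj i K H G"
  unfolding B_adj_def by blast

theorem mainTheorem9:
  fixes K1 K2 :: "'a set set" and i :: nat and ord :: "'a set \<Rightarrow> 'a list"
  assumes "simplicial_complex K1" and "simplicial_complex K2"
    and "vertices K1 \<noteq> {}" and "vertices K2 \<noteq> {}"
    and "vertices K1 \<inter> vertices K2 = {}"
    and "cdim K1 + cdim K2 \<ge> int i + 1"
    and "orientation (join K1 K2) ord"
  shows "\<not> B_balanced i (join K1 K2) ord"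
proof
  assume bal: "B_balanced i (join K1 K2) ord"
  define K where "K = join K1 K2"
  obtain F1 where F1: "F1 \<in> K1" "int (card F1) - 1 = cdim K1" using max_face assms(1,3) by blast
  obtain F2 where F2: "F2 \<in> K2" "int (card F2) - 1 = cdim K2" using max_face assms(2,4) by blast
  have fin1: "finite F1" using F1(1) assms(1) unfolding simplicial_complex_def by blast
  have fin2: "finite F2" using F2(1) assms(2) unfolding simplicial_complex_def by blast
  have v1: "F1 \<subseteq> vertices K1" using F1(1) unfolding vertices_def by blast
  have v2: "F2 \<subseteq> vertices K2" using F2(1) unfolding vertices_def by blast
  have disj: "F1 \<inter> F2 = {}" using v1 v2 assms(5) by blast
  have cu: "card (F1 \<union> F2) = card F1 + card F2" by (rule card_Un_disjoint[OF fin1 fin2 disj])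
  have "i + 3 \<le> card (F1 \<union> F2)" using F1(2) F2(2) assms(6) cu by linarith
  then obtain V where V: "V \<subseteq> F1 \<union> F2" "card V = i + 3" "finite V"
    by (rule obtain_subset_with_card_n)
  have sub: "H \<in> K" if "H \<subseteq> V" for H
    unfolding K_def by (rule join_sub[OF assms(1,2) F1(1) F2(1)]) (use that V(1) in blast)
  have okK: "distinct (ord H) \<and> set (ord H) = H" if "H \<in> K" for H
    using assms(7) that unfolding orientation_def K_def by blast
  define W where "W = ord V"
  have oW: "distinct W \<and> set W = V" unfolding W_def by (rule okK[OF sub]) simp
  have dW: "distinct W" and sW: "set W = V" using oW by blast+
  have lW: "length W = i + 3" using distinct_card[OF dW] sW V(2) by simp
  define x where "x = W ! 0"
  define y where "y = W ! 1"
  define z where "z = W ! 2"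
  have mem: "x \<in> V" "y \<in> V" "z \<in> V" using lW sW unfolding x_def y_def z_def by auto
  have ne: "x \<noteq> y" "y \<noteq> z" "z \<noteq> x" using dW lW unfolding x_def y_def z_def
    by (auto simp: nth_eq_iff_index_eq)
  have ok: "distinct (ord H) \<and> set (ord H) = H" if "H \<subseteq> set W" for H
    using that sub okK sW by blast
  have cs: "cycle_sign ord [V - {x}, V - {x, y}, V - {y}, V - {y, z}, V - {z}, V - {z, x}] = -1"
    using cycle_neg[OF dW, of x y z ord] mem ne ok unfolding sW by blast
  have c1: "V - {a} \<in> faces_of (i + 1) K" if "a \<in> V" for a
  proof -
    have "card (V - {a}) = card V - 1" using that by (rule card_Diff_singleton)
    then show ?thesis using V(2) sub[of "V - {a}"] unfolding faces_of_def by simp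
  qed
  have c2: "V - {a, b} \<in> faces_of i K" if ab: "a \<in> V" "b \<in> V" "a \<noteq> b" for a b
  proof -
    have sab: "{a, b} \<subseteq> V" using ab by blast
    have "card (V - {a, b}) = card V - card {a, b}" by (rule card_Diff_subset[OF _ sab]) simp
    moreover have "card {a, b} = 2" using ab(3) by simp
    ultimately have "card (V - {a, b}) = i + 1" using V(2) by simp
    then show ?thesis using sub[of "V - {a, b}"] unfolding faces_of_def by simp
  qed
  have ps1: "V - {a, b} \<subset> V - {a}" if "b \<in> V" "a \<noteq> b" for a b using that by blast
  have ps2: "V - {a, b} \<subset> V - {b}" if "a \<in> V" "a \<noteq> b" for a b using that by blast
  have "B_cycle i K [V - {x}, V - {x, y}, V - {y}, V - {y, z}, V - {z}, V - {z, x}]"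
  proof (rule B_cycle6)
    show "distinct [V - {x}, V - {x, y}, V - {y}, V - {y, z}, V - {z}, V - {z, x}]"
      using mem ne by (simp add: diff_ne insert_Diff_if) blast
    show "set [V - {x}, V - {x, y}, V - {y}, V - {y, z}, V - {z}, V - {z, x}] \<subseteq> B_vertices i K"
      unfolding B_vertices_def using c1 c2 mem ne by simp
    show "B_adj i K (V - {x}) (V - {x, y})" by (rule adj_down[OF c2 c1 ps1]) (use mem ne in auto)
    show "B_adj i K (V - {x, y}) (V - {y})" by (rule adj_up[OF c2 c1 ps2]) (use mem ne in auto)
    show "B_adj i K (V - {y}) (V - {y, z})" by (rule adj_down[OF c2 c1 ps1]) (use mem ne in auto)
    show "B_adj i K (V - {y, z}) (V - {z})" by (rule adj_up[OF c2 c1 ps2]) (use mem ne in auto)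
    show "B_adj i K (V - {z}) (V - {z, x})" by (rule adj_down[OF c2 c1 ps1]) (use mem ne in auto)
    show "B_adj i K (V - {z, x}) (V - {x})" by (rule adj_up[OF c2 c1 ps2]) (use mem ne in auto)
  qed
  then have "cycle_sign ord [V - {x}, V - {x, y}, V - {y}, V - {y, z}, V - {z}, V - {z, x}] > 0"
    using bal unfolding B_balanced_def K_def by blast
  then show False using cs by simp
qed

end
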